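(* Let $\lambda\in\mathbb{R}$, let $r,n\ge0$ be integers and let $z\in\mathbb{C}$. Then \[ \phi_{n+1,\lambda}^{(r)}(|z|^2)=\sum_{k=0}^{n}\binom{n}{k}(-\lambda)^{n-k}(n-k)!\Big(|z|^2\phi_{k,\lambda}^{(r+1)}(|z|^2)+r\,\phi_{k,\lambda}^{(r)}(|z|^2)\Big) =\sum_{k=0}^{n}\binom{n}{k}\big(r(-\lambda)_{k,\lambda}+|z|^2(1-\lambda)_{k,\lambda}\big)\phi_{n-k,\lambda}^{(r)}(|z|^2). \] In particular, for $|z|=1$, \[ \phi_{n+1,\lambda}^{(r)}=\sum_{k=0}^{n}\binom{n}{k}(-\lambda)^{n-k}(n-k)!\Big(\phi_{k,\lambda}^{(r+1)}+r\,\phi_{k,\lambda}^{(r)}\Big)=\sum_{k=0}^{n}\binom{n}{k}\big(r(-\lambda)_{k,\lambda}+(1-\lambda)_{k,\lambda}\big)\phi_{n-k,\lambda}^{(r)}. \]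
   Context: Notation: $(x)_0=1$, $(x)_m=x(x-1)\cdots(x-m+1)$; $(y)_{0,\lambda}=1$, $(y)_{n,\lambda}=y(y-\lambda)\cdots(y-(n-1)\lambda)$. The degenerate $r$-Stirling numbers of the second kind ${n+r\brace k+r}_{r,\lambda}$ are defined by $(x+r)_{n,\lambda}=\sum_{k=0}^{n}{n+r\brace k+r}_{r,\lambda}(x)_k$ ($n\ge0$), and the degenerate $r$-Bell polynomials are $\phi_{n,\lambda}^{(r)}(x)=\sum_{k=0}^{n}{n+r\brace k+r}_{r,\lambda}x^k$, with $\phi_{n,\lambda}^{(r)}=\phi_{n,\lambda}^{(r)}(1)$. *)

theory Defs
  imports Complex_Main
begin

definition deg_fall :: "real \<Rightarrow> real \<Rightarrow> nat \<Rightarrow> real" where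
  "deg_fall y l n = (\<Prod>i<n. y - real i * l)"

definition fall :: "real \<Rightarrow> nat \<Rightarrow> real" where
  "fall x m = (\<Prod>i<m. x - real i)"

text \<open>Degenerate r-Stirling numbers of the second kind {n+r, k+r}_{r,lambda}:
  the (unique) coefficients with (x+r)_{n,lambda} = sum_{k=0}^n S(k) (x)_k for all x,
  extended by 0 for k > n.\<close>
definition dr_stirling2 :: "nat \<Rightarrow> real \<Rightarrow> nat \<Rightarrow> nat \<Rightarrow> real" where
  "dr_stirling2 r l n k =
     (THE c. (\<forall>x. deg_fall (x + real r) l n = (\<Sum>j\<le>n. c j * fall x j))
             \<and> (\<forall>j>n. c j = 0)) k"

definition dr_bell :: "nat \<Rightarrow> real \<Rightarrow> nat \<Rightarrow> real \<Rightarrow> real" where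
  "dr_bell r l n x = (\<Sum>k\<le>n. dr_stirling2 r l n k * x ^ k)"

end

theory Submission imports Defs begin

lemma pascal_sum:
  fixes f g :: "nat \<Rightarrow> real"
  shows "(\<Sum>k\<le>Suc n. real (Suc n choose k) * f k * g (Suc n - k))
       = (\<Sum>k\<le>n. real (n choose k) * f (Suc k) * g (n - k))
         + (\<Sum>k\<le>n. real (n choose k) * f k * g (Suc n - k))"
proof -
  have 1: "(\<Sum>k\<le>Suc n. real (Suc n choose k) * f k * g (Suc n - k))
      = f 0 * g (Suc n) + (\<Sum>k\<le>n. real (Suc n choose Suc k) * f (Suc k) * g (n - k))"
    by (subst sum.atMost_Suc_shift) simp
  have 2: "(\<Sum>k\<le>n. real (Suc n choose Suc k) * f (Suc k) * g (n - k)) = (\<Sum>k\<le>n. real (n choose k) * f (Suc k) * g (n - k))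
      + (\<Sum>k\<le>n. real (n choose Suc k) * f (Suc k) * g (n - k))"
    by (simp add: sum.distrib algebra_simps)
  have 3: "(\<Sum>k\<le>n. real (n choose k) * f k * g (Suc n - k))
      = (\<Sum>k\<le>Suc n. real (n choose k) * f k * g (Suc n - k))" by simp
  have 4: "(\<Sum>k\<le>Suc n. real (n choose k) * f k * g (Suc n - k)) = f 0 * g (Suc n) + (\<Sum>k\<le>n. real (n choose Suc k) * f (Suc k) * g (n - k))"
    by (subst sum.atMost_Suc_shift) simp
  show ?thesis unfolding 1 2 3 4 by simp
qed

lemma deg_fall_0[simp]: "deg_fall a l 0 = 1" by (simp add: deg_fall_def)
lemma deg_fall_Suc: "deg_fall a l (Suc n) = deg_fall a l n * (a - real n * l)"
  by (simp add: deg_fall_def)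
lemma deg_fall_Suc': "deg_fall a l (Suc n) = a * deg_fall (a - l) l n"
  unfolding deg_fall_def prod.lessThan_Suc_shift by (simp add: algebra_simps)

lemma deg_fall_vander:
  "deg_fall (a + b) l n = (\<Sum>k\<le>n. real (n choose k) * deg_fall a l k * deg_fall b l (n - k))"
proof (induction n)
  case 0 then show ?case by simp
next
  case (Suc n)
  have "deg_fall (a + b) l (Suc n) = (\<Sum>k\<le>n. real (n choose k) * deg_fall a l k * deg_fall b l (n - k) * ((a - real k * l) + (b - real (n - k) * l)))"
    by (simp add: deg_fall_Suc Suc.IH sum_distrib_right, rule sum.cong, auto simp: algebra_simps of_nat_diff)
  also have "\<dots> = (\<Sum>k\<le>n. real (n choose k) * deg_fall a l (Suc k) * deg_fall b l (n - k))
         + (\<Sum>k\<le>n. real (n choose k) * deg_fall a l k * deg_fall b l (Suc n - k))"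
    by (simp add: sum.distrib[symmetric], rule sum.cong, auto simp: deg_fall_Suc Suc_diff_le algebra_simps)
  finally show ?case by (simp only: pascal_sum)
qed

lemma deg_fall_neg: "deg_fall (- l) l m = (- l) ^ m * fact m"
  by (induction m) (auto simp: deg_fall_Suc algebra_simps)

lemma fall_Suc': "fall y (Suc j) = y * fall (y - 1) j"
  unfolding fall_def prod.lessThan_Suc_shift by (simp add: algebra_simps)

lemma fall_Suc: "fall y (Suc j) = fall y j * (y - real j)"
  by (simp add: fall_def)

lemma fall_nat_zero: "m < j \<Longrightarrow> fall (real m) j = 0"
  unfolding fall_def by (rule prod_zero) auto

lemma fall_nat_nz: "fall (real j) j \<noteq> 0"
  unfolding fall_def by (auto simp: prod_zero_iff)

lemma fall_uniq:
  fixes c :: "nat \<Rightarrow> real"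
  assumes sup: "\<forall>j>N. c j = 0" and z: "\<forall>y. (\<Sum>j\<le>N. c j * fall y j) = 0"
  shows "c j = 0"
proof (induction j rule: less_induct)
  case (less j)
  show ?case
  proof (cases "j \<le> N")
    case False then show ?thesis using sup by auto
  next
    case True
    have "(\<Sum>i\<le>N. c i * fall (real j) i) = (\<Sum>i\<in>{j}. c i * fall (real j) i)"
      by (rule sum.mono_neutral_right) (use True less.IH fall_nat_zero in \<open>auto simp: nat_neq_iff\<close>)
    then have "c j * fall (real j) j = 0" using z by simp
    then show ?thesis using fall_nat_nz by simp
  qed
qed


fun St :: "nat \<Rightarrow> real \<Rightarrow> nat \<Rightarrow> nat \<Rightarrow> real" where
  "St r l 0 k = (if k = 0 then 1 else 0)"
| "St r l (Suc n) k = (if k = 0 then 0 else St r l n (k - 1)) + (real k + real r - real n * l) * St r l n k"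

lemma St_sup: "n < k \<Longrightarrow> St r l n k = 0"
  by (induction n arbitrary: k) auto

lemma St_expand: "(\<Sum>j\<le>n. St r l n j * fall x j) = deg_fall (x + real r) l n"
proof (induction n)
  case 0 then show ?case by (simp add: fall_def)
next
  case (Suc n)
  have "deg_fall (x + real r) l (Suc n) = (\<Sum>j\<le>n. St r l n j * fall x j * ((x - real j) + (real j + real r - real n * l)))"
    unfolding deg_fall_Suc Suc.IH[symmetric] sum_distrib_right by (rule sum.cong) (auto simp: algebra_simps)
  also have "\<dots> = (\<Sum>j\<le>n. St r l n j * fall x (Suc j)) + (\<Sum>j\<le>n. (real j + real r - real n * l) * St r l n j * fall x j)"
    by (simp add: sum.distrib[symmetric] fall_Suc algebra_simps)
  also have "(\<Sum>j\<le>n. (real j + real r - real n * l) * St r l n j * fall x j) = (\<Sum>j\<le>Suc n. (real j + real r - real n * l) * St r l n j * fall x j)"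
    by (simp add: St_sup)
  also have "(\<Sum>j\<le>n. St r l n j * fall x (Suc j)) = (\<Sum>j\<le>Suc n. (if j = 0 then 0 else St r l n (j - 1)) * fall x j)"
    by (subst sum.atMost_Suc_shift) simp
  finally show ?case by (simp add: sum.distrib[symmetric] algebra_simps)
qed

lemma stirling_eq: "dr_stirling2 r l n = St r l n"
  unfolding dr_stirling2_def
proof (rule the_equality)
  show "(\<forall>x. deg_fall (x + real r) l n = (\<Sum>j\<le>n. St r l n j * fall x j)) \<and> (\<forall>j>n. St r l n j = 0)"
    by (simp add: St_expand St_sup)
next
  fix c assume c: "(\<forall>x. deg_fall (x + real r) l n = (\<Sum>j\<le>n. c j * fall x j)) \<and> (\<forall>j>n. c j = 0)"
  show "c = St r l n"
  proof
    fix j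
    have "(\<lambda>j. c j - St r l n j) j = 0"
    proof (rule fall_uniq[of n])
      show "\<forall>j>n. c j - St r l n j = 0" using c by (simp add: St_sup)
      show "\<forall>y. (\<Sum>j\<le>n. (c j - St r l n j) * fall y j) = 0"
      proof
        fix y
        have "(\<Sum>j\<le>n. c j * fall y j) = deg_fall (y + real r) l n" using c by simp
        then show "(\<Sum>j\<le>n. (c j - St r l n j) * fall y j) = 0"
          by (simp add: left_diff_distrib sum_subtractf St_expand)
      qed
    qed
    then show "c j = St r l n j" by simp
  qed
qed

definition Trep :: "real \<Rightarrow> (real \<Rightarrow> real) \<Rightarrow> real \<Rightarrow> bool" where
  "Trep x p v \<longleftrightarrow> (\<exists>N c. (\<forall>j>N. c j = 0) \<and> (\<forall>y. p y = (\<Sum>j\<le>N. c j * fall y j)) \<and> v = (\<Sum>j\<le>N. c j * x ^ j))"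

lemma pad:
  fixes c :: "nat \<Rightarrow> real"
  assumes "\<forall>j>N. c j = 0" "N \<le> M"
  shows "(\<Sum>j\<le>N. c j * h j) = (\<Sum>j\<le>M. c j * h j)"
  by (rule sum.mono_neutral_left) (use assms in auto)

lemma Trep_unique:
  assumes "Trep x p v" "Trep x p w" shows "v = w"
proof -
  obtain N1 c1 where 1: "\<forall>j>N1. c1 j = 0" "\<forall>y. p y = (\<Sum>j\<le>N1. c1 j * fall y j)" "v = (\<Sum>j\<le>N1. c1 j * x ^ j)"
    using assms(1) unfolding Trep_def by blast
  obtain N2 c2 where 2: "\<forall>j>N2. c2 j = 0" "\<forall>y. p y = (\<Sum>j\<le>N2. c2 j * fall y j)" "w = (\<Sum>j\<le>N2. c2 j * x ^ j)"
    using assms(2) unfolding Trep_def by blast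
  define M where "M = max N1 N2"
  have p1: "(\<Sum>j\<le>N1. c1 j * h j) = (\<Sum>j\<le>M. c1 j * h j)" for h
    using pad[OF 1(1)] M_def by simp
  have p2: "(\<Sum>j\<le>N2. c2 j * h j) = (\<Sum>j\<le>M. c2 j * h j)" for h
    using pad[OF 2(1)] M_def by simp
  have eq: "(\<lambda>j. c1 j - c2 j) j = 0" for j
  proof (rule fall_uniq[of M])
    show "\<forall>j>M. c1 j - c2 j = 0" using 1(1) 2(1) M_def by simp
    show "\<forall>y. (\<Sum>j\<le>M. (c1 j - c2 j) * fall y j) = 0"
      using 1(2) 2(2) p1 p2 by (simp add: left_diff_distrib sum_subtractf)
  qed
  show ?thesis using 1(3) 2(3) p1 p2 eq by simp
qed

lemma Trep_bell: "Trep x (\<lambda>y. deg_fall (y + real r) l n) (dr_bell r l n x)"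
  unfolding Trep_def dr_bell_def stirling_eq
  by (rule exI[of _ n], rule exI[of _ "St r l n"]) (simp add: St_sup St_expand)

lemma Trep_lin:
  assumes "Trep x p v" "Trep x q w"
  shows "Trep x (\<lambda>y. a * p y + b * q y) (a * v + b * w)"
proof -
  obtain N1 c1 where 1: "\<forall>j>N1. c1 j = 0" "\<forall>y. p y = (\<Sum>j\<le>N1. c1 j * fall y j)" "v = (\<Sum>j\<le>N1. c1 j * x ^ j)"
    using assms(1) unfolding Trep_def by blast
  obtain N2 c2 where 2: "\<forall>j>N2. c2 j = 0" "\<forall>y. q y = (\<Sum>j\<le>N2. c2 j * fall y j)" "w = (\<Sum>j\<le>N2. c2 j * x ^ j)"
    using assms(2) unfolding Trep_def by blast
  define M where "M = max N1 N2"
  have p1: "(\<Sum>j\<le>N1. c1 j * h j) = (\<Sum>j\<le>M. c1 j * h j)" for h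
    using pad[OF 1(1)] M_def by simp
  have p2: "(\<Sum>j\<le>N2. c2 j * h j) = (\<Sum>j\<le>M. c2 j * h j)" for h
    using pad[OF 2(1)] M_def by simp
  show ?thesis unfolding Trep_def
    apply (rule exI[of _ M], rule exI[of _ "\<lambda>j. a * c1 j + b * c2 j"])
    using 1 2 p1 p2 M_def by (auto simp: algebra_simps sum.distrib sum_distrib_left)
qed

lemma Trep_cong: "Trep x p v \<Longrightarrow> (\<And>y. p y = q y) \<Longrightarrow> v = w \<Longrightarrow> Trep x q w"
proof -
  assume "Trep x p v" "\<And>y. p y = q y" "v = w"
  moreover have "p = q" using \<open>\<And>y. p y = q y\<close> by auto
  ultimately show ?thesis by simp
qed

lemma Trep_zero: "Trep x (\<lambda>y. 0) 0"
  unfolding Trep_def by (rule exI[of _ 0], rule exI[of _ "\<lambda>j. 0"]) simp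

lemma Trep_sum:
  assumes "finite A" "\<And>k. k \<in> A \<Longrightarrow> Trep x (P k) (V k)"
  shows "Trep x (\<lambda>y. \<Sum>k\<in>A. P k y) (\<Sum>k\<in>A. V k)"
  using assms
proof (induction A rule: finite_induct)
  case empty then show ?case using Trep_zero by simp
next
  case (insert a A)
  have "Trep x (\<lambda>y. 1 * P a y + 1 * (\<Sum>k\<in>A. P k y)) (1 * V a + 1 * (\<Sum>k\<in>A. V k))"
    by (rule Trep_lin) (use insert in auto)
  then show ?case by (rule Trep_cong) (use insert in auto)
qed

lemma Trep_shift:
  assumes "Trep x p v" shows "Trep x (\<lambda>y. y * p (y - 1)) (x * v)"
proof -
  obtain N c where 1: "\<forall>j>N. c j = 0" "\<forall>y. p y = (\<Sum>j\<le>N. c j * fall y j)" "v = (\<Sum>j\<le>N. c j * x ^ j)"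
    using assms(1) unfolding Trep_def by blast
  have e: "(\<Sum>j\<le>Suc N. (if j = 0 then 0 else c (j - 1)) * h j) = (\<Sum>j\<le>N. c j * h (Suc j))" for h :: "nat \<Rightarrow> real"
    by (subst sum.atMost_Suc_shift) simp
  have a: "y * p (y - 1) = (\<Sum>j\<le>Suc N. (if j = 0 then 0 else c (j - 1)) * fall y j)" for y
    unfolding e fall_Suc' using 1(2) by (simp add: sum_distrib_left algebra_simps)
  have b: "x * v = (\<Sum>j\<le>Suc N. (if j = 0 then 0 else c (j - 1)) * x ^ j)"
    unfolding e using 1(3) by (simp add: sum_distrib_left algebra_simps)
  show ?thesis unfolding Trep_def
    apply (rule exI[of _ "Suc N"], rule exI[of _ "\<lambda>j. if j = 0 then 0 else c (j - 1)"])
    using 1(1) a b by auto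
qed


lemma poly1: "deg_fall (y + real r) l (n + 1) = (\<Sum>k\<le>n. real (n choose k) * (- l) ^ (n - k) * fact (n - k) *
                (y * deg_fall (y - 1 + real (r + 1)) l k + real r * deg_fall (y + real r) l k))"
proof -
  have "deg_fall (y + real r) l (n + 1) = (y + real r) * deg_fall ((y + real r) + (- l)) l n"
    by (simp add: deg_fall_Suc')
  also have "\<dots> = (y + real r) * (\<Sum>k\<le>n. real (n choose k) * deg_fall (y + real r) l k * ((- l) ^ (n - k) * fact (n - k)))"
    by (simp only: deg_fall_vander[of "y + real r" "- l" l n] deg_fall_neg mult.assoc)
  also have "\<dots> = (\<Sum>k\<le>n. real (n choose k) * (- l) ^ (n - k) * fact (n - k) *
                (y * deg_fall (y - 1 + real (r + 1)) l k + real r * deg_fall (y + real r) l k))"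
    by (simp add: sum_distrib_left algebra_simps)
  finally show ?thesis .
qed

lemma poly2: "deg_fall (y + real r) l (n + 1) = (\<Sum>k\<le>n. real (n choose k) *
                (real r * deg_fall (- l) l k * deg_fall (y + real r) l (n - k) + deg_fall (1 - l) l k * (y * deg_fall (y - 1 + real r) l (n - k))))"
proof -
  have "deg_fall (y + real r) l (n + 1) = real r * deg_fall ((- l) + (y + real r)) l n + y * deg_fall ((1 - l) + (y - 1 + real r)) l n"
    by (simp add: deg_fall_Suc' algebra_simps)
  also have "\<dots> = (\<Sum>k\<le>n. real (n choose k) *
                (real r * deg_fall (- l) l k * deg_fall (y + real r) l (n - k) + deg_fall (1 - l) l k * (y * deg_fall (y - 1 + real r) l (n - k))))"
    unfolding deg_fall_vander[of "- l" "y + real r" l n] deg_fall_vander[of "1 - l" "y - 1 + real r" l n] by (simp add: sum_distrib_left sum.distrib algebra_simps)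
  finally show ?thesis .
qed

lemma ident1: "dr_bell r l (n + 1) x = (\<Sum>k\<le>n. real (n choose k) * (- l) ^ (n - k) * fact (n - k) *
                (x * dr_bell (r + 1) l k x + real r * dr_bell r l k x))"
proof -
  have "Trep x (\<lambda>y. \<Sum>k\<le>n. real (n choose k) * (- l) ^ (n - k) * fact (n - k) *
                (y * deg_fall (y - 1 + real (r + 1)) l k + real r * deg_fall (y + real r) l k))
        (\<Sum>k\<le>n. real (n choose k) * (- l) ^ (n - k) * fact (n - k) *
                (x * dr_bell (r + 1) l k x + real r * dr_bell r l k x))"
  proof (rule Trep_sum)
    fix k
    let ?c = "real (n choose k) * (- l) ^ (n - k) * fact (n - k)"
    have "Trep x (\<lambda>y. ?c * (y * deg_fall (y - 1 + real (r + 1)) l k) + (?c * real r) * deg_fall (y + real r) l k)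
       (?c * (x * dr_bell (r + 1) l k x) + (?c * real r) * dr_bell r l k x)"
      by (rule Trep_lin[OF Trep_shift[OF Trep_bell] Trep_bell])
    then show "Trep x (\<lambda>y. ?c * (y * deg_fall (y - 1 + real (r + 1)) l k + real r * deg_fall (y + real r) l k))
       (?c * (x * dr_bell (r + 1) l k x + real r * dr_bell r l k x))"
      by (rule Trep_cong) (simp_all add: algebra_simps)
  qed simp
  then have "Trep x (\<lambda>y. deg_fall (y + real r) l (n + 1)) (\<Sum>k\<le>n. real (n choose k) * (- l) ^ (n - k) * fact (n - k) *
                (x * dr_bell (r + 1) l k x + real r * dr_bell r l k x))"
    by (rule Trep_cong) (simp_all only: poly1)
  then show ?thesis using Trep_unique Trep_bell by blast
qed

lemma ident2: "dr_bell r l (n + 1) x = (\<Sum>k\<le>n. real (n choose k) *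
                (real r * deg_fall (- l) l k + x * deg_fall (1 - l) l k) * dr_bell r l (n - k) x)"
proof -
  have "Trep x (\<lambda>y. \<Sum>k\<le>n. real (n choose k) *
                (real r * deg_fall (- l) l k * deg_fall (y + real r) l (n - k) + deg_fall (1 - l) l k * (y * deg_fall (y - 1 + real r) l (n - k))))
        (\<Sum>k\<le>n. real (n choose k) *
                (real r * deg_fall (- l) l k + x * deg_fall (1 - l) l k) * dr_bell r l (n - k) x)"
  proof (rule Trep_sum)
    fix k
    let ?a = "real (n choose k) * (real r * deg_fall (- l) l k)"
    let ?b = "real (n choose k) * deg_fall (1 - l) l k"
    have "Trep x (\<lambda>y. ?a * deg_fall (y + real r) l (n - k) + ?b * (y * deg_fall (y - 1 + real r) l (n - k)))
       (?a * dr_bell r l (n - k) x + ?b * (x * dr_bell r l (n - k) x))"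
      by (rule Trep_lin[OF Trep_bell Trep_shift[OF Trep_bell]])
    then show "Trep x (\<lambda>y. real (n choose k) *
                (real r * deg_fall (- l) l k * deg_fall (y + real r) l (n - k) + deg_fall (1 - l) l k * (y * deg_fall (y - 1 + real r) l (n - k))))
        (real (n choose k) *
                (real r * deg_fall (- l) l k + x * deg_fall (1 - l) l k) * dr_bell r l (n - k) x)"
      by (rule Trep_cong) (simp_all add: algebra_simps)
  qed simp
  then have "Trep x (\<lambda>y. deg_fall (y + real r) l (n + 1)) (\<Sum>k\<le>n. real (n choose k) *
                (real r * deg_fall (- l) l k + x * deg_fall (1 - l) l k) * dr_bell r l (n - k) x)"
    by (rule Trep_cong) (simp_all only: poly2)
  then show ?thesis using Trep_unique Trep_bell by blast
qed

theorem theorem9: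
  fixes l :: real and r n :: nat and z :: complex
  shows "dr_bell r l (n + 1) ((cmod z)\<^sup>2)
           = (\<Sum>k\<le>n. real (n choose k) * (- l) ^ (n - k) * fact (n - k) *
                ((cmod z)\<^sup>2 * dr_bell (r + 1) l k ((cmod z)\<^sup>2) + real r * dr_bell r l k ((cmod z)\<^sup>2)))
         \<and> dr_bell r l (n + 1) ((cmod z)\<^sup>2)
           = (\<Sum>k\<le>n. real (n choose k) *
                (real r * deg_fall (- l) l k + (cmod z)\<^sup>2 * deg_fall (1 - l) l k) *
                dr_bell r l (n - k) ((cmod z)\<^sup>2))
         \<and> (cmod z = 1 \<longrightarrow>
             dr_bell r l (n + 1) 1
               = (\<Sum>k\<le>n. real (n choose k) * (- l) ^ (n - k) * fact (n - k) *
                    (dr_bell (r + 1) l k 1 + real r * dr_bell r l k 1))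
             \<and> dr_bell r l (n + 1) 1
               = (\<Sum>k\<le>n. real (n choose k) *
                    (real r * deg_fall (- l) l k + deg_fall (1 - l) l k) * dr_bell r l (n - k) 1))"
  using ident1[of r l n "(cmod z)\<^sup>2"] ident2[of r l n "(cmod z)\<^sup>2"]
    ident1[of r l n 1] ident2[of r l n 1] by simp

end
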